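(* Let $(L,\delta,\alpha,\beta)$ be a BiHom-Lie algebra, let $(V,\alpha_V,\beta_V)$ be an abelian BiHom-Lie algebra, and let $d\colon (L\oplus V)\times(L\oplus V)\to L\oplus V$ be a bilinear map. Let $i_0\colon V\to L\oplus V$, $i_0(v)=v$, and $\pi_0\colon L\oplus V\to L$, $\pi_0(x+v)=x$. Then $(L\oplus V,d,\alpha+\alpha_V,\beta+\beta_V)$ is a BiHom-Lie algebra and $$0\longrightarrow (V,\alpha_V,\beta_V)\xrightarrow{\ i_0\ }(L\oplus V,d,\alpha+\alpha_V,\beta+\beta_V)\xrightarrow{\ \pi_0\ }(L,\delta,\alpha,\beta)\longrightarrow 0$$ is an extension of $L$ by $V$ if and only if there exist bilinear maps $\lambda_l\colon L\times V\to V$, $\lambda_r\colon V\times L\to V$ and $\theta\colon L\times L\to V$ such that $$d(x+v,y+w)=\delta(x,y)+\theta(x,y)+\lambda_l(x,w)+\lambda_r(v,y)\quad\text{for all }x,y\in L,\ v,w\in V,$$ $(\lambda_l,\lambda_r)$ is a representation of $L$ on $V$, and $\theta$ is a $2$-cocycle of $L$ on $V$ with respect to this representation.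
   Context: All vector spaces are over a field $\mathbb{K}$. A BiHom-Lie algebra $(L,[\cdot,\cdot],\alpha,\beta)$ is a vector space $L$ with a bilinear map $[\cdot,\cdot]\colon L\times L\to L$ and linear maps $\alpha,\beta\colon L\to L$ such that $\alpha\circ\beta=\beta\circ\alpha$, $[\beta(x),\alpha(y)]=-[\beta(y),\alpha(x)]$, and $[\beta^2(x),[\beta(y),\alpha(z)]]+[\beta^2(y),[\beta(z),\alpha(x)]]+[\beta^2(z),[\beta(x),\alpha(y)]]=0$ for all $x,y,z\in L$ ($\alpha,\beta$ need not be multiplicative). A morphism $f\colon(L,[\cdot,\cdot],\alpha,\beta)\to(L',[\cdot,\cdot]',\alpha',\beta')$ is a linear map with $f\circ\alpha=\alpha'\circ f$, $f\circ\beta=\beta'\circ f$, $f([x,y])=[f(x),f(y)]'$. An abelian BiHom-Lie algebra $(V,\alpha_V,\beta_V)$ is a BiHom-Lie algebra whose bracket is identically zero (so $\alpha_V,\beta_V$ are commuting linear maps). On $L\oplus V$, $\alpha+\alpha_V$ denotes $x+v\mapsto \alpha(x)+\alpha_V(v)$, and similarly $\beta+\beta_V$. An extension of $(L,\delta,\alpha,\beta)$ by $(V,\mu,\alpha_V,\beta_V)$ is a sequence $0\to V\xrightarrow{i}M\xrightarrow{\pi}L\to 0$ of BiHom-Lie algebras and BiHom-Lie morphisms with $i$ injective, $\pi$ surjective and $\mathrm{Im}(i)=\ker(\pi)$. A representation of the BiHom-Lie algebra $(L,\delta,\alpha,\beta)$ on the abelian BiHom-Lie algebra $(V,\alpha_V,\beta_V)$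 is a pair of bilinear maps $\lambda_l\colon L\times V\to V$, $\lambda_r\colon V\times L\to V$ such that for all $x,y\in L$, $v\in V$: $\lambda_r(\beta_V(v),\alpha(y))=-\lambda_l(\beta(y),\alpha_V(v))$ and $\lambda_l(\beta^2(x),\lambda_l(\beta(y),\alpha_V(v)))+\lambda_l(\beta^2(y),\lambda_r(\beta_V(v),\alpha(x)))+\lambda_r(\beta_V^2(v),\delta(\beta(x),\alpha(y)))=0$. Given such a representation, a $2$-cocycle of $L$ on $V$ is a bilinear map $\theta\colon L\times L\to V$ with $\theta(\beta(x),\alpha(y))=-\theta(\beta(y),\alpha(x))$ and $\theta(\beta^2(x),\delta(\beta(y),\alpha(z)))-\theta(\beta^2(y),\delta(\beta(x),\alpha(z)))+\theta(\beta^2(z),\delta(\beta(x),\alpha(y)))+\lambda_l(\beta^2(x),\theta(\beta(y),\alpha(z)))-\lambda_l(\beta^2(y),\theta(\beta(x),\alpha(z)))+\lambda_l(\beta^2(z),\theta(\beta(x),\alpha(y)))=0$ for all $x,y,z\in L$. *)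

theory Defs
  imports Complex_Main "HOL-Library.Product_Plus"
begin

text \<open>Vector spaces over a field 'k are types of class ab_group_add together with a
scalar multiplication s satisfying the axioms of the library locale vector_space.\<close>

definition bilin ::
  "('k::field \<Rightarrow> 'a::ab_group_add \<Rightarrow> 'a) \<Rightarrow> ('k \<Rightarrow> 'b::ab_group_add \<Rightarrow> 'b)
   \<Rightarrow> ('k \<Rightarrow> 'c::ab_group_add \<Rightarrow> 'c) \<Rightarrow> ('a \<Rightarrow> 'b \<Rightarrow> 'c) \<Rightarrow> bool" where
  "bilin s1 s2 s3 f \<longleftrightarrow>
     (\<forall>x. Vector_Spaces.linear s2 s3 (f x)) \<and> (\<forall>y. Vector_Spaces.linear s1 s3 (\<lambda>x. f x y))"

definition bihom_lie ::
  "('k::field \<Rightarrow> 'a::ab_group_add \<Rightarrow> 'a) \<Rightarrow> ('a \<Rightarrow> 'a \<Rightarrow> 'a) \<Rightarrow> ('a \<Rightarrow> 'a) \<Rightarrow> ('a \<Rightarrow> 'a) \<Rightarrow> bool" where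
  "bihom_lie s br \<alpha> \<beta> \<longleftrightarrow>
     vector_space s \<and> bilin s s s br \<and>
     Vector_Spaces.linear s s \<alpha> \<and> Vector_Spaces.linear s s \<beta> \<and>
     \<alpha> \<circ> \<beta> = \<beta> \<circ> \<alpha> \<and>
     (\<forall>x y. br (\<beta> x) (\<alpha> y) = - br (\<beta> y) (\<alpha> x)) \<and>
     (\<forall>x y z. br (\<beta> (\<beta> x)) (br (\<beta> y) (\<alpha> z)) + br (\<beta> (\<beta> y)) (br (\<beta> z) (\<alpha> x))
              + br (\<beta> (\<beta> z)) (br (\<beta> x) (\<alpha> y)) = 0)"

definition abelian_bihom_lie ::
  "('k::field \<Rightarrow> 'a::ab_group_add \<Rightarrow> 'a) \<Rightarrow> ('a \<Rightarrow> 'a) \<Rightarrow> ('a \<Rightarrow> 'a) \<Rightarrow> bool" where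
  "abelian_bihom_lie s \<alpha> \<beta> \<longleftrightarrow> bihom_lie s (\<lambda>_ _. 0) \<alpha> \<beta>"

definition bihom_morphism ::
  "('k::field \<Rightarrow> 'a::ab_group_add \<Rightarrow> 'a) \<Rightarrow> ('a \<Rightarrow> 'a \<Rightarrow> 'a) \<Rightarrow> ('a \<Rightarrow> 'a) \<Rightarrow> ('a \<Rightarrow> 'a)
   \<Rightarrow> ('k \<Rightarrow> 'b::ab_group_add \<Rightarrow> 'b) \<Rightarrow> ('b \<Rightarrow> 'b \<Rightarrow> 'b) \<Rightarrow> ('b \<Rightarrow> 'b) \<Rightarrow> ('b \<Rightarrow> 'b)
   \<Rightarrow> ('a \<Rightarrow> 'b) \<Rightarrow> bool" where
  "bihom_morphism s1 br1 \<alpha>1 \<beta>1 s2 br2 \<alpha>2 \<beta>2 f \<longleftrightarrow>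
     Vector_Spaces.linear s1 s2 f \<and> f \<circ> \<alpha>1 = \<alpha>2 \<circ> f \<and> f \<circ> \<beta>1 = \<beta>2 \<circ> f \<and>
     (\<forall>x y. f (br1 x y) = br2 (f x) (f y))"

definition bihom_extension ::
  "('k::field \<Rightarrow> 'v::ab_group_add \<Rightarrow> 'v) \<Rightarrow> ('v \<Rightarrow> 'v \<Rightarrow> 'v) \<Rightarrow> ('v \<Rightarrow> 'v) \<Rightarrow> ('v \<Rightarrow> 'v)
   \<Rightarrow> ('v \<Rightarrow> 'm)
   \<Rightarrow> ('k \<Rightarrow> 'm::ab_group_add \<Rightarrow> 'm) \<Rightarrow> ('m \<Rightarrow> 'm \<Rightarrow> 'm) \<Rightarrow> ('m \<Rightarrow> 'm) \<Rightarrow> ('m \<Rightarrow> 'm)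
   \<Rightarrow> ('m \<Rightarrow> 'l)
   \<Rightarrow> ('k \<Rightarrow> 'l::ab_group_add \<Rightarrow> 'l) \<Rightarrow> ('l \<Rightarrow> 'l \<Rightarrow> 'l) \<Rightarrow> ('l \<Rightarrow> 'l) \<Rightarrow> ('l \<Rightarrow> 'l) \<Rightarrow> bool" where
  "bihom_extension sV brV \<alpha>V \<beta>V i sM brM \<alpha>M \<beta>M p sL brL \<alpha>L \<beta>L \<longleftrightarrow>
     bihom_lie sV brV \<alpha>V \<beta>V \<and> bihom_lie sM brM \<alpha>M \<beta>M \<and> bihom_lie sL brL \<alpha>L \<beta>L \<and>
     bihom_morphism sV brV \<alpha>V \<beta>V sM brM \<alpha>M \<beta>M i \<and>
     bihom_morphism sM brM \<alpha>M \<beta>M sL brL \<alpha>L \<beta>L p \<and>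
     inj i \<and> surj p \<and> range i = {m. p m = 0}"

definition bihom_rep ::
  "('k::field \<Rightarrow> 'l::ab_group_add \<Rightarrow> 'l) \<Rightarrow> ('l \<Rightarrow> 'l \<Rightarrow> 'l) \<Rightarrow> ('l \<Rightarrow> 'l) \<Rightarrow> ('l \<Rightarrow> 'l)
   \<Rightarrow> ('k \<Rightarrow> 'v::ab_group_add \<Rightarrow> 'v) \<Rightarrow> ('v \<Rightarrow> 'v) \<Rightarrow> ('v \<Rightarrow> 'v)
   \<Rightarrow> ('l \<Rightarrow> 'v \<Rightarrow> 'v) \<Rightarrow> ('v \<Rightarrow> 'l \<Rightarrow> 'v) \<Rightarrow> bool" where
  "bihom_rep sL \<delta> \<alpha> \<beta> sV \<alpha>V \<beta>V lamL lamR \<longleftrightarrow>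
     bilin sL sV sV lamL \<and> bilin sV sL sV lamR \<and>
     (\<forall>y v. lamR (\<beta>V v) (\<alpha> y) = - lamL (\<beta> y) (\<alpha>V v)) \<and>
     (\<forall>x y v. lamL (\<beta> (\<beta> x)) (lamL (\<beta> y) (\<alpha>V v)) + lamL (\<beta> (\<beta> y)) (lamR (\<beta>V v) (\<alpha> x))
              + lamR (\<beta>V (\<beta>V v)) (\<delta> (\<beta> x) (\<alpha> y)) = 0)"

definition bihom_2cocycle ::
  "('k::field \<Rightarrow> 'l::ab_group_add \<Rightarrow> 'l) \<Rightarrow> ('l \<Rightarrow> 'l \<Rightarrow> 'l) \<Rightarrow> ('l \<Rightarrow> 'l) \<Rightarrow> ('l \<Rightarrow> 'l)
   \<Rightarrow> ('k \<Rightarrow> 'v::ab_group_add \<Rightarrow> 'v) \<Rightarrow> ('l \<Rightarrow> 'v \<Rightarrow> 'v) \<Rightarrow> ('l \<Rightarrow> 'l \<Rightarrow> 'v) \<Rightarrow> bool" where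
  "bihom_2cocycle sL \<delta> \<alpha> \<beta> sV lamL \<theta> \<longleftrightarrow>
     bilin sL sL sV \<theta> \<and>
     (\<forall>x y. \<theta> (\<beta> x) (\<alpha> y) = - \<theta> (\<beta> y) (\<alpha> x)) \<and>
     (\<forall>x y z. \<theta> (\<beta> (\<beta> x)) (\<delta> (\<beta> y) (\<alpha> z)) - \<theta> (\<beta> (\<beta> y)) (\<delta> (\<beta> x) (\<alpha> z))
              + \<theta> (\<beta> (\<beta> z)) (\<delta> (\<beta> x) (\<alpha> y))
              + lamL (\<beta> (\<beta> x)) (\<theta> (\<beta> y) (\<alpha> z)) - lamL (\<beta> (\<beta> y)) (\<theta> (\<beta> x) (\<alpha> z))
              + lamL (\<beta> (\<beta> z)) (\<theta> (\<beta> x) (\<alpha> y)) = 0)"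

definition sum_scale :: "('k \<Rightarrow> 'l \<Rightarrow> 'l) \<Rightarrow> ('k \<Rightarrow> 'v \<Rightarrow> 'v) \<Rightarrow> 'k \<Rightarrow> 'l \<times> 'v \<Rightarrow> 'l \<times> 'v" where
  "sum_scale sL sV c p = (sL c (fst p), sV c (snd p))"

definition sum_map :: "('l \<Rightarrow> 'l) \<Rightarrow> ('v \<Rightarrow> 'v) \<Rightarrow> 'l \<times> 'v \<Rightarrow> 'l \<times> 'v" where
  "sum_map f g p = (f (fst p), g (snd p))"

definition inc0 :: "'v \<Rightarrow> 'l::zero \<times> 'v" where
  "inc0 v = (0, v)"

definition proj0 :: "'l \<times> 'v \<Rightarrow> 'l" where
  "proj0 p = fst p"

end

theory Submission
  imports Defs
begin


lemma lin_simps: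
  assumes "Vector_Spaces.linear s1 s2 f"
  shows "f 0 = 0" "f (x + y) = f x + f y" "f (- x) = - f x"
proof -
  have add: "\<And>a b. f (a + b) = f a + f b" using assms by (simp add: Vector_Spaces.linear_iff)
  show z: "f 0 = 0" using add[of 0 0] by simp
  show "f (x + y) = f x + f y" by (rule add)
  have "f x + f (- x) = 0" using add[of x "-x"] z by simp
  then show "f (- x) = - f x" by (simp add: eq_neg_iff_add_eq_0 add.commute)
qed

lemma lin_scale: "Vector_Spaces.linear s1 s2 f \<Longrightarrow> f (s1 c x) = s2 c (f x)"
  by (simp add: Vector_Spaces.linear_iff)

lemma bilin_simps:
  assumes "bilin s1 s2 s3 b"
  shows "b x 0 = 0" "b 0 y = 0" "b x (v + w) = b x v + b x w" "b (x1 + x2) y = b x1 y + b x2 y"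
    "b x (- v) = - b x v" "b (- x) y = - b x y"
proof -
  have l1: "Vector_Spaces.linear s2 s3 (b x)" for x using assms by (simp add: bilin_def)
  have l2: "Vector_Spaces.linear s1 s3 (\<lambda>x. b x y)" for y using assms by (simp add: bilin_def)
  show "b x 0 = 0" "b x (v + w) = b x v + b x w" "b x (- v) = - b x v"
    using lin_simps[OF l1] by auto
  show "b 0 y = 0" "b (x1 + x2) y = b x1 y + b x2 y" "b (- x) y = - b x y"
    using lin_simps[OF l2] by auto
qed

lemma vs_sum:
  assumes "vector_space sL" "vector_space sV"
  shows "vector_space (sum_scale sL sV)"
  using assms unfolding vector_space_def sum_scale_def by (simp add: prod_eq_iff)

lemma vs_zero: assumes "vector_space s" shows "s c 0 = 0"
proof -
  have "s c (0 + 0) = s c 0 + s c 0" using assms unfolding vector_space_def by blast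
  then show ?thesis by simp
qed

lemma lin_fst: "vector_space sL \<Longrightarrow> vector_space sV \<Longrightarrow> Vector_Spaces.linear (sum_scale sL sV) sL fst"
  by (simp add: Vector_Spaces.linear_iff vs_sum sum_scale_def)
lemma lin_snd: "vector_space sL \<Longrightarrow> vector_space sV \<Longrightarrow> Vector_Spaces.linear (sum_scale sL sV) sV snd"
  by (simp add: Vector_Spaces.linear_iff vs_sum sum_scale_def)
lemma lin_incL: "vector_space sL \<Longrightarrow> vector_space sV \<Longrightarrow> Vector_Spaces.linear sL (sum_scale sL sV) (\<lambda>x. (x, 0))"
  by (simp add: Vector_Spaces.linear_iff vs_sum sum_scale_def vs_zero)
lemma lin_incV: "vector_space sL \<Longrightarrow> vector_space sV \<Longrightarrow> Vector_Spaces.linear sV (sum_scale sL sV) (\<lambda>x. (0, x))"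
  by (simp add: Vector_Spaces.linear_iff vs_sum sum_scale_def vs_zero)
lemma lin_summap: "Vector_Spaces.linear sL sL f \<Longrightarrow> Vector_Spaces.linear sV sV g \<Longrightarrow>
   Vector_Spaces.linear (sum_scale sL sV) (sum_scale sL sV) (sum_map f g)"
  by (simp add: Vector_Spaces.linear_iff vs_sum sum_scale_def sum_map_def)



theorem mainTheorem1:
  fixes sL :: "'k::field \<Rightarrow> 'l::ab_group_add \<Rightarrow> 'l"
    and sV :: "'k \<Rightarrow> 'v::ab_group_add \<Rightarrow> 'v"
    and \<delta> :: "'l \<Rightarrow> 'l \<Rightarrow> 'l" and \<alpha> \<beta> :: "'l \<Rightarrow> 'l"
    and \<alpha>V \<beta>V :: "'v \<Rightarrow> 'v"
    and d :: "'l \<times> 'v \<Rightarrow> 'l \<times> 'v \<Rightarrow> 'l \<times> 'v"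
  assumes L: "bihom_lie sL \<delta> \<alpha> \<beta>"
    and V: "abelian_bihom_lie sV \<alpha>V \<beta>V"
    and d: "bilin (sum_scale sL sV) (sum_scale sL sV) (sum_scale sL sV) d"
  shows "(bihom_lie (sum_scale sL sV) d (sum_map \<alpha> \<alpha>V) (sum_map \<beta> \<beta>V) \<and>
          bihom_extension sV (\<lambda>_ _. 0) \<alpha>V \<beta>V inc0
            (sum_scale sL sV) d (sum_map \<alpha> \<alpha>V) (sum_map \<beta> \<beta>V) proj0 sL \<delta> \<alpha> \<beta>)
    \<longleftrightarrow>
    (\<exists>lamL lamR \<theta>.
       bilin sL sV sV lamL \<and> bilin sV sL sV lamR \<and> bilin sL sL sV \<theta> \<and>
       (\<forall>x y v w. d (x, v) (y, w) = (\<delta> x y, \<theta> x y + lamL x w + lamR v y)) \<and>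
       bihom_rep sL \<delta> \<alpha> \<beta> sV \<alpha>V \<beta>V lamL lamR \<and>
       bihom_2cocycle sL \<delta> \<alpha> \<beta> sV lamL \<theta>)"
  
proof -
  have vsL: "vector_space sL" and bilD: "bilin sL sL sL \<delta>" and l\<alpha>: "Vector_Spaces.linear sL sL \<alpha>"
    and l\<beta>: "Vector_Spaces.linear sL sL \<beta>" and comm: "\<alpha> \<circ> \<beta> = \<beta> \<circ> \<alpha>"
    and skL: "\<forall>x y. \<delta> (\<beta> x) (\<alpha> y) = - \<delta> (\<beta> y) (\<alpha> x)"
    and jacL: "\<forall>x y z. \<delta> (\<beta> (\<beta> x)) (\<delta> (\<beta> y) (\<alpha> z)) + \<delta> (\<beta> (\<beta> y)) (\<delta> (\<beta> z) (\<alpha> x))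
              + \<delta> (\<beta> (\<beta> z)) (\<delta> (\<beta> x) (\<alpha> y)) = 0"
    using L unfolding bihom_lie_def by blast+
  have vsV: "vector_space sV" and l\<alpha>V: "Vector_Spaces.linear sV sV \<alpha>V"
    and l\<beta>V: "Vector_Spaces.linear sV sV \<beta>V" and commV: "\<alpha>V \<circ> \<beta>V = \<beta>V \<circ> \<alpha>V"
    using V unfolding abelian_bihom_lie_def bihom_lie_def by auto
  have dl1: "Vector_Spaces.linear (sum_scale sL sV) (sum_scale sL sV) (\<lambda>p. d p q)" for q
    using d unfolding bilin_def by blast
  have dl2: "Vector_Spaces.linear (sum_scale sL sV) (sum_scale sL sV) (d p)" for p
    using d unfolding bilin_def by blast
  have dz: "d 0 q = 0" "d p 0 = 0" for p q using lin_simps(1)[OF dl1] lin_simps(1)[OF dl2] by auto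
  note zs0 = lin_simps(1)[OF l\<alpha>] lin_simps(1)[OF l\<beta>] lin_simps(1)[OF l\<alpha>V] lin_simps(1)[OF l\<beta>V]
    bilin_simps[OF bilD]
  define J where "J = (\<lambda>br X Y Z. br (sum_map \<beta> \<beta>V (sum_map \<beta> \<beta>V X)) (br (sum_map \<beta> \<beta>V Y) (sum_map \<alpha> \<alpha>V Z))
     + br (sum_map \<beta> \<beta>V (sum_map \<beta> \<beta>V Y)) (br (sum_map \<beta> \<beta>V Z) (sum_map \<alpha> \<alpha>V X))
     + br (sum_map \<beta> \<beta>V (sum_map \<beta> \<beta>V Z)) (br (sum_map \<beta> \<beta>V X) (sum_map \<alpha> \<alpha>V Y)))"
  have commx: "\<alpha> (\<beta> x) = \<beta> (\<alpha> x)" for x using comm by (metis comp_apply)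
  have commVx: "\<alpha>V (\<beta>V x) = \<beta>V (\<alpha>V x)" for x using commV by (metis comp_apply)
  show ?thesis
  proof
    assume H: "bihom_lie (sum_scale sL sV) d (sum_map \<alpha> \<alpha>V) (sum_map \<beta> \<beta>V) \<and>
          bihom_extension sV (\<lambda>_ _. 0) \<alpha>V \<beta>V inc0
            (sum_scale sL sV) d (sum_map \<alpha> \<alpha>V) (sum_map \<beta> \<beta>V) proj0 sL \<delta> \<alpha> \<beta>"
    have dsk: "\<forall>X Y. d (sum_map \<beta> \<beta>V X) (sum_map \<alpha> \<alpha>V Y) = - d (sum_map \<beta> \<beta>V Y) (sum_map \<alpha> \<alpha>V X)"
      using H unfolding bihom_lie_def by blast
    have djac: "\<forall>X Y Z. J d X Y Z = 0"
      using H unfolding bihom_lie_def J_def by blast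
    have inc: "d (0, v) (0, w) = 0" for v w
      using H unfolding bihom_extension_def bihom_morphism_def inc0_def by (simp add: zero_prod_def)
    have prj: "fst (d p q) = \<delta> (fst p) (fst q)" for p q
      using H unfolding bihom_extension_def bihom_morphism_def proj0_def by blast
    define \<theta> where "\<theta> = (\<lambda>x y. snd (d (x, 0) (y, 0)))"
    define lamL where "lamL = (\<lambda>x w. snd (d (x, 0) (0, w)))"
    define lamR where "lamR = (\<lambda>v y. snd (d (0, v) (y, 0)))"
    have bT: "bilin sL sL sV \<theta>"
      unfolding bilin_def
    proof (intro conjI allI)
      fix x
      have "\<theta> x = snd o (d (x, 0) o (\<lambda>y. (y, 0)))" by (simp add: \<theta>_def fun_eq_iff)
      then show "Vector_Spaces.linear sL sV (\<theta> x)"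
        using Vector_Spaces.linear_compose[OF Vector_Spaces.linear_compose[OF lin_incL[OF vsL vsV] dl2] lin_snd[OF vsL vsV]]
        by simp
    next
      fix y
      have "(\<lambda>x. \<theta> x y) = snd o ((\<lambda>p. d p (y, 0)) o (\<lambda>y. (y, 0)))" by (simp add: \<theta>_def fun_eq_iff)
      then show "Vector_Spaces.linear sL sV (\<lambda>x. \<theta> x y)"
        using Vector_Spaces.linear_compose[OF Vector_Spaces.linear_compose[OF lin_incL[OF vsL vsV] dl1] lin_snd[OF vsL vsV]]
        by simp
    qed
    have bLL: "bilin sL sV sV lamL"
      unfolding bilin_def
    proof (intro conjI allI)
      fix x
      have "lamL x = snd o (d (x, 0) o (\<lambda>y. (0, y)))" by (simp add: lamL_def fun_eq_iff)
      then show "Vector_Spaces.linear sV sV (lamL x)"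
        using Vector_Spaces.linear_compose[OF Vector_Spaces.linear_compose[OF lin_incV[OF vsL vsV] dl2] lin_snd[OF vsL vsV]]
        by simp
    next
      fix y
      have "(\<lambda>x. lamL x y) = snd o ((\<lambda>p. d p (0, y)) o (\<lambda>y. (y, 0)))" by (simp add: lamL_def fun_eq_iff)
      then show "Vector_Spaces.linear sL sV (\<lambda>x. lamL x y)"
        using Vector_Spaces.linear_compose[OF Vector_Spaces.linear_compose[OF lin_incL[OF vsL vsV] dl1] lin_snd[OF vsL vsV]]
        by simp
    qed
    have bLR: "bilin sV sL sV lamR"
      unfolding bilin_def
    proof (intro conjI allI)
      fix x
      have "lamR x = snd o (d (0, x) o (\<lambda>y. (y, 0)))" by (simp add: lamR_def fun_eq_iff)
      then show "Vector_Spaces.linear sL sV (lamR x)"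
        using Vector_Spaces.linear_compose[OF Vector_Spaces.linear_compose[OF lin_incL[OF vsL vsV] dl2] lin_snd[OF vsL vsV]]
        by simp
    next
      fix y
      have "(\<lambda>x. lamR x y) = snd o ((\<lambda>p. d p (y, 0)) o (\<lambda>y. (0, y)))" by (simp add: lamR_def fun_eq_iff)
      then show "Vector_Spaces.linear sV sV (\<lambda>x. lamR x y)"
        using Vector_Spaces.linear_compose[OF Vector_Spaces.linear_compose[OF lin_incV[OF vsL vsV] dl1] lin_snd[OF vsL vsV]]
        by simp
    qed
    have F: "\<forall>x y v w. d (x, v) (y, w) = (\<delta> x y, \<theta> x y + lamL x w + lamR v y)"
    proof (intro allI)
      fix x y v w
      have e1: "d (x, v) q = d (x, 0) q + d (0, v) q" for q
        using lin_simps(2)[OF dl1[of q], of "(x, 0)" "(0, v)"] by simp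
      have e2: "d p (y, w) = d p (y, 0) + d p (0, w)" for p
        using lin_simps(2)[OF dl2[of p], of "(y, 0)" "(0, w)"] by simp
      have "d (x, v) (y, w) = d (x, 0) (y, 0) + d (x, 0) (0, w) + (d (0, v) (y, 0) + d (0, v) (0, w))"
        unfolding e1[of "(y, w)"] e2[of "(x, 0)"] e2[of "(0, v)"] by simp
      then show "d (x, v) (y, w) = (\<delta> x y, \<theta> x y + lamL x w + lamR v y)"
        by (simp add: prod_eq_iff prj inc zs0 \<theta>_def lamL_def lamR_def)
    qed
    note zs = zs0 bilin_simps[OF bT] bilin_simps[OF bLL] bilin_simps[OF bLR] F[rule_format] sum_map_def
    have thsk: "\<theta> (\<beta> x) (\<alpha> y) = - \<theta> (\<beta> y) (\<alpha> x)" for x y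
      using dsk[rule_format, of "(x, 0)" "(y, 0)"] by (simp add: zs)
    have rsk: "lamR (\<beta>V v) (\<alpha> y) = - lamL (\<beta> y) (\<alpha>V v)" for y v
      using dsk[rule_format, of "(0, v)" "(y, 0)"] by (simp add: zs)
    have rjac: "lamL (\<beta> (\<beta> x)) (lamL (\<beta> y) (\<alpha>V v)) + lamL (\<beta> (\<beta> y)) (lamR (\<beta>V v) (\<alpha> x))
              + lamR (\<beta>V (\<beta>V v)) (\<delta> (\<beta> x) (\<alpha> y)) = 0" for x y v
      using djac[rule_format, of "(x, 0)" "(y, 0)" "(0, v)"] by (simp add: zs J_def zero_prod_def)
    have cjac: "\<theta> (\<beta> (\<beta> x)) (\<delta> (\<beta> y) (\<alpha> z)) - \<theta> (\<beta> (\<beta> y)) (\<delta> (\<beta> x) (\<alpha> z))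
              + \<theta> (\<beta> (\<beta> z)) (\<delta> (\<beta> x) (\<alpha> y))
              + lamL (\<beta> (\<beta> x)) (\<theta> (\<beta> y) (\<alpha> z)) - lamL (\<beta> (\<beta> y)) (\<theta> (\<beta> x) (\<alpha> z))
              + lamL (\<beta> (\<beta> z)) (\<theta> (\<beta> x) (\<alpha> y)) = 0" for x y z
    proof -
      have s1: "\<delta> (\<beta> z) (\<alpha> x) = - \<delta> (\<beta> x) (\<alpha> z)" using skL by blast
      have "\<theta> (\<beta> (\<beta> x)) (\<delta> (\<beta> y) (\<alpha> z)) - \<theta> (\<beta> (\<beta> y)) (\<delta> (\<beta> x) (\<alpha> z))
              + \<theta> (\<beta> (\<beta> z)) (\<delta> (\<beta> x) (\<alpha> y))
              + lamL (\<beta> (\<beta> x)) (\<theta> (\<beta> y) (\<alpha> z)) - lamL (\<beta> (\<beta> y)) (\<theta> (\<beta> x) (\<alpha> z))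
              + lamL (\<beta> (\<beta> z)) (\<theta> (\<beta> x) (\<alpha> y)) = snd (J d (x, 0) (y, 0) (z, 0))"
        by (simp add: zs J_def s1 thsk[of z x] algebra_simps)
      then show ?thesis using djac by simp
    qed
    show "\<exists>lamL lamR \<theta>.
       bilin sL sV sV lamL \<and> bilin sV sL sV lamR \<and> bilin sL sL sV \<theta> \<and>
       (\<forall>x y v w. d (x, v) (y, w) = (\<delta> x y, \<theta> x y + lamL x w + lamR v y)) \<and>
       bihom_rep sL \<delta> \<alpha> \<beta> sV \<alpha>V \<beta>V lamL lamR \<and>
       bihom_2cocycle sL \<delta> \<alpha> \<beta> sV lamL \<theta>"
      apply (rule exI[of _ lamL], rule exI[of _ lamR], rule exI[of _ \<theta>])
      using bLL bLR bT F rsk rjac thsk cjac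
      unfolding bihom_rep_def bihom_2cocycle_def by blast
  next
    assume "\<exists>lamL lamR \<theta>.
       bilin sL sV sV lamL \<and> bilin sV sL sV lamR \<and> bilin sL sL sV \<theta> \<and>
       (\<forall>x y v w. d (x, v) (y, w) = (\<delta> x y, \<theta> x y + lamL x w + lamR v y)) \<and>
       bihom_rep sL \<delta> \<alpha> \<beta> sV \<alpha>V \<beta>V lamL lamR \<and>
       bihom_2cocycle sL \<delta> \<alpha> \<beta> sV lamL \<theta>"
    then obtain lamL lamR \<theta> where bLL: "bilin sL sV sV lamL" and bLR: "bilin sV sL sV lamR"
      and bT: "bilin sL sL sV \<theta>" and F: "\<forall>x y v w. d (x, v) (y, w) = (\<delta> x y, \<theta> x y + lamL x w + lamR v y)"
      and rep: "bihom_rep sL \<delta> \<alpha> \<beta> sV \<alpha>V \<beta>V lamL lamR"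
      and coc: "bihom_2cocycle sL \<delta> \<alpha> \<beta> sV lamL \<theta>" by blast
    have rsk: "lamR (\<beta>V v) (\<alpha> y) = - lamL (\<beta> y) (\<alpha>V v)" for y v
      using rep unfolding bihom_rep_def by blast
    have rjac: "lamL (\<beta> (\<beta> x)) (lamL (\<beta> y) (\<alpha>V v)) + lamL (\<beta> (\<beta> y)) (lamR (\<beta>V v) (\<alpha> x))
              + lamR (\<beta>V (\<beta>V v)) (\<delta> (\<beta> x) (\<alpha> y)) = 0" for x y v
      using rep unfolding bihom_rep_def by blast
    have thsk: "\<theta> (\<beta> x) (\<alpha> y) = - \<theta> (\<beta> y) (\<alpha> x)" for x y
      using coc unfolding bihom_2cocycle_def by blast
    have cjac: "\<theta> (\<beta> (\<beta> x)) (\<delta> (\<beta> y) (\<alpha> z)) - \<theta> (\<beta> (\<beta> y)) (\<delta> (\<beta> x) (\<alpha> z))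
              + \<theta> (\<beta> (\<beta> z)) (\<delta> (\<beta> x) (\<alpha> y))
              + lamL (\<beta> (\<beta> x)) (\<theta> (\<beta> y) (\<alpha> z)) - lamL (\<beta> (\<beta> y)) (\<theta> (\<beta> x) (\<alpha> z))
              + lamL (\<beta> (\<beta> z)) (\<theta> (\<beta> x) (\<alpha> y)) = 0" for x y z
      using coc unfolding bihom_2cocycle_def by blast
    note zs = zs0 bilin_simps[OF bT] bilin_simps[OF bLL] bilin_simps[OF bLR] F[rule_format] sum_map_def
    have lieS: "bihom_lie (sum_scale sL sV) d (sum_map \<alpha> \<alpha>V) (sum_map \<beta> \<beta>V)"
      unfolding bihom_lie_def
    proof (intro conjI allI)
      show "vector_space (sum_scale sL sV)" by (rule vs_sum[OF vsL vsV])
      show "bilin (sum_scale sL sV) (sum_scale sL sV) (sum_scale sL sV) d" by (rule d)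
      show "Vector_Spaces.linear (sum_scale sL sV) (sum_scale sL sV) (sum_map \<alpha> \<alpha>V)"
        by (rule lin_summap[OF l\<alpha> l\<alpha>V])
      show "Vector_Spaces.linear (sum_scale sL sV) (sum_scale sL sV) (sum_map \<beta> \<beta>V)"
        by (rule lin_summap[OF l\<beta> l\<beta>V])
      show "sum_map \<alpha> \<alpha>V \<circ> sum_map \<beta> \<beta>V = sum_map \<beta> \<beta>V \<circ> sum_map \<alpha> \<alpha>V"
        by (simp add: fun_eq_iff sum_map_def commx commVx)
    next
      fix X Y :: "'l \<times> 'v"
      obtain x v where X: "X = (x, v)" by (cases X)
      obtain y w where Y: "Y = (y, w)" by (cases Y)
      show "d (sum_map \<beta> \<beta>V X) (sum_map \<alpha> \<alpha>V Y) = - d (sum_map \<beta> \<beta>V Y) (sum_map \<alpha> \<alpha>V X)"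
        using skL[rule_format, of x y] by (simp add: X Y zs rsk thsk[of x y] algebra_simps)
    next
      fix X Y Z :: "'l \<times> 'v"
      obtain x u where X: "X = (x, u)" by (cases X)
      obtain y v where Y: "Y = (y, v)" by (cases Y)
      obtain z w where Z: "Z = (z, w)" by (cases Z)
      have s1: "\<delta> (\<beta> z) (\<alpha> x) = - \<delta> (\<beta> x) (\<alpha> z)" using skL by blast
      have "snd (J d X Y Z) = (\<theta> (\<beta> (\<beta> x)) (\<delta> (\<beta> y) (\<alpha> z)) - \<theta> (\<beta> (\<beta> y)) (\<delta> (\<beta> x) (\<alpha> z))
              + \<theta> (\<beta> (\<beta> z)) (\<delta> (\<beta> x) (\<alpha> y))
              + lamL (\<beta> (\<beta> x)) (\<theta> (\<beta> y) (\<alpha> z)) - lamL (\<beta> (\<beta> y)) (\<theta> (\<beta> x) (\<alpha> z))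
              + lamL (\<beta> (\<beta> z)) (\<theta> (\<beta> x) (\<alpha> y)))
          + (lamL (\<beta> (\<beta> x)) (lamL (\<beta> y) (\<alpha>V w)) + lamL (\<beta> (\<beta> y)) (lamR (\<beta>V w) (\<alpha> x))
              + lamR (\<beta>V (\<beta>V w)) (\<delta> (\<beta> x) (\<alpha> y)))
          + (lamL (\<beta> (\<beta> y)) (lamL (\<beta> z) (\<alpha>V u)) + lamL (\<beta> (\<beta> z)) (lamR (\<beta>V u) (\<alpha> y))
              + lamR (\<beta>V (\<beta>V u)) (\<delta> (\<beta> y) (\<alpha> z)))
          + (lamL (\<beta> (\<beta> z)) (lamL (\<beta> x) (\<alpha>V v)) + lamL (\<beta> (\<beta> x)) (lamR (\<beta>V v) (\<alpha> z))
              + lamR (\<beta>V (\<beta>V v)) (\<delta> (\<beta> z) (\<alpha> x)))"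
        by (simp add: X Y Z zs J_def s1 thsk[of z x] algebra_simps)
      then have "snd (J d X Y Z) = 0" by (simp only: cjac rjac add_0)
      moreover have "fst (J d X Y Z) = 0" using jacL by (simp add: X Y Z zs J_def)
      ultimately have "J d X Y Z = 0" by (simp add: prod_eq_iff)
      then show "d (sum_map \<beta> \<beta>V (sum_map \<beta> \<beta>V X)) (d (sum_map \<beta> \<beta>V Y) (sum_map \<alpha> \<alpha>V Z)) +
         d (sum_map \<beta> \<beta>V (sum_map \<beta> \<beta>V Y)) (d (sum_map \<beta> \<beta>V Z) (sum_map \<alpha> \<alpha>V X)) +
         d (sum_map \<beta> \<beta>V (sum_map \<beta> \<beta>V Z)) (d (sum_map \<beta> \<beta>V X) (sum_map \<alpha> \<alpha>V Y)) = 0"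
        by (simp add: J_def)
    qed
    have Vl: "bihom_lie sV (\<lambda>_ _. 0) \<alpha>V \<beta>V" using V unfolding abelian_bihom_lie_def .
    have inc0_eq: "inc0 = (\<lambda>x. (0, x))" by (simp add: fun_eq_iff inc0_def)
    have proj0_eq: "proj0 = fst" by (simp add: fun_eq_iff proj0_def)
    have m1: "bihom_morphism sV (\<lambda>_ _. 0) \<alpha>V \<beta>V (sum_scale sL sV) d (sum_map \<alpha> \<alpha>V) (sum_map \<beta> \<beta>V) inc0"
      unfolding bihom_morphism_def inc0_eq
      using lin_incV[OF vsL vsV] by (simp add: fun_eq_iff zs)
    have m2: "bihom_morphism (sum_scale sL sV) d (sum_map \<alpha> \<alpha>V) (sum_map \<beta> \<beta>V) sL \<delta> \<alpha> \<beta> proj0"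
      unfolding bihom_morphism_def proj0_eq
      using lin_fst[OF vsL vsV] by (auto simp add: fun_eq_iff zs)
    have "inj inc0" by (simp add: inj_def inc0_def)
    moreover have "surj proj0" unfolding proj0_eq surj_def by (metis fst_conv)
    moreover have "range inc0 = {m. proj0 m = 0}"
      unfolding proj0_eq inc0_eq by (auto simp: image_iff prod_eq_iff)
    ultimately show "bihom_lie (sum_scale sL sV) d (sum_map \<alpha> \<alpha>V) (sum_map \<beta> \<beta>V) \<and>
          bihom_extension sV (\<lambda>_ _. 0) \<alpha>V \<beta>V inc0
            (sum_scale sL sV) d (sum_map \<alpha> \<alpha>V) (sum_map \<beta> \<beta>V) proj0 sL \<delta> \<alpha> \<beta>"
      using lieS Vl L m1 m2 unfolding bihom_extension_def by blast
  qed
qed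

end
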